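(* Let $\Lambda$ be the eigenspectrum of a $2S\times2S$ quantum CM which satisfies the unique pairing condition but not the $(S-1)$-pure unique pairing condition. Write the unique perfect matching of $G(\Lambda)$ as pairs $(\nu_i e^{-2r_i},\nu_i e^{2r_i})$, $i=1,\dots,S$, with $r_i\ge 0$, $\nu_i\ge1$, $\nu_1\ge\dots\ge\nu_S$, and let $\zeta$ be the number of indices with $\nu_i>1$ (so $\nu_i>1$ for $i\le\zeta$ and $\nu_i=1$ for $i>\zeta$; $\zeta\ge2$). Assume that in the $2\zeta$-tuple $(\nu_1e^{-2r_1},\nu_1e^{2r_1},\dots,\nu_\zeta e^{-2r_\zeta},\nu_\zeta e^{2r_\zeta})$ there are at least two entries each of which is different from all other entries of the tuple. Then (1) the set of symplectic eigenvalues and squeezing parameters of quantum CMs with eigenspectrum $\Lambda$ is not unique (there exist quantum CMs with eigenspectrum $\Lambda$ having different multisets of symplectic eigenvalues), and (2) there exist two quantum CMs with eigenspectrum $\Lambda$ related by an orthogonal transformation but not by any element of $\mathrm{SpO}(2S,\mathbb{R})$.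
   Context: Fix an integer $S\ge 1$. Coordinates of $\mathbb{R}^{2S}$ are ordered as $(q_1,p_1,\dots,q_S,p_S)$; coordinates $2i-1$ and $2i$ form the $i$-th mode. Let $\Omega=\bigoplus_{i=1}^S\begin{pmatrix}0&1\\-1&0\end{pmatrix}$. A real matrix $A$ is symplectic if $A^T\Omega A=\Omega$. $\mathrm{SpO}(2S,\mathbb{R})$ denotes the group of real $2S\times2S$ matrices that are both orthogonal and symplectic. A quantum CM is a real symmetric positive-definite $2S\times 2S$ matrix $\Gamma$ such that $\Gamma+i\Omega$ is positive semidefinite. By Williamson's theorem any real positive-definite $\Gamma$ can be written $\Gamma=A\,\mathrm{diag}(\nu_1,\nu_1,\dots,\nu_S,\nu_S)\,A^T$ with $A$ symplectic; the multiset $\{\nu_i\}$ (the symplectic eigenvalues) is uniquely determined by $\Gamma$. Let $\Lambda=(\lambda_i)_{i=1}^{2S}$ be the eigenvalues of a quantum CM in non-ascending order. Let $G(\Lambda)$ be the graph with vertex set $\{1,\dots,2S\}$ and edge set $\{\{i,j\}: i<j,\ \lambda_i\lambda_j\ge 1\}$; an edge $\{i,j\}$ is pure if $\lambda_i\lambda_j=1$. $\Lambda$ satisfies the unique pairing condition if $G(\Lambda)$ has a unique perfect matching up to permutations of vertices carrying equal eigenvalues. $\Lambda$ satisfies the $t$-pure unique pairing condition if it satisfies the unique pairing condition and at least $t$ of the $S$ edges of this perfect matching are pure. *)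

theory Defs
  imports "Jordan_Normal_Form.Char_Poly" "HOL-Library.Multiset" "HOL-Combinatorics.Permutations"
begin

(* Matrices are Jordan_Normal_Form matrices; indices are 0-based.
   Coordinates (q_1,p_1,...,q_S,p_S) become indices 0,1,...,2S-2,2S-1;
   mode i (0-based) consists of indices 2i and 2i+1. *)

definition Omega :: "nat \<Rightarrow> real mat" where
  "Omega S = mat (2*S) (2*S) (\<lambda>(i,j).
      if even i \<and> j = i + 1 then 1 else if odd i \<and> i = j + 1 then -1 else 0)"

definition symplectic :: "nat \<Rightarrow> real mat \<Rightarrow> bool" where
  "symplectic S A \<longleftrightarrow> A \<in> carrier_mat (2*S) (2*S) \<and> transpose_mat A * Omega S * A = Omega S"

definition orthogonal_real :: "nat \<Rightarrow> real mat \<Rightarrow> bool" where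
  "orthogonal_real n A \<longleftrightarrow> A \<in> carrier_mat n n \<and> transpose_mat A * A = 1\<^sub>m n"

definition SpO :: "nat \<Rightarrow> real mat set" where
  "SpO S = {A. orthogonal_real (2*S) A \<and> symplectic S A}"

definition pos_def_real :: "nat \<Rightarrow> real mat \<Rightarrow> bool" where
  "pos_def_real n G \<longleftrightarrow> G \<in> carrier_mat n n \<and>
     (\<forall>v \<in> carrier_vec n. v \<noteq> 0\<^sub>v n \<longrightarrow> v \<bullet> (G *\<^sub>v v) > 0)"

definition psd_complex :: "nat \<Rightarrow> complex mat \<Rightarrow> bool" where
  "psd_complex n M \<longleftrightarrow> M \<in> carrier_mat n n \<and>
     (\<forall>v \<in> carrier_vec n. Im (conjugate v \<bullet> (M *\<^sub>v v)) = 0 \<and>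
                              Re (conjugate v \<bullet> (M *\<^sub>v v)) \<ge> 0)"

definition quantum_CM :: "nat \<Rightarrow> real mat \<Rightarrow> bool" where
  "quantum_CM S G \<longleftrightarrow> G \<in> carrier_mat (2*S) (2*S) \<and> transpose_mat G = G \<and>
     pos_def_real (2*S) G \<and>
     psd_complex (2*S) (map_mat complex_of_real G + \<i> \<cdot>\<^sub>m map_mat complex_of_real (Omega S))"

definition eigenspectrum :: "real mat \<Rightarrow> real list \<Rightarrow> bool" where
  "eigenspectrum G Lam \<longleftrightarrow> sorted_wrt (\<ge>) Lam \<and> length Lam = dim_row G \<and>
     char_poly G = (\<Prod>a \<leftarrow> Lam. [:- a, 1:])"

definition williamson_diag :: "nat \<Rightarrow> real list \<Rightarrow> real mat" where
  "williamson_diag S nu = mat (2*S) (2*S) (\<lambda>(i,j). if i = j then nu ! (i div 2) else 0)"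

definition symplectic_eigenvalues :: "nat \<Rightarrow> real mat \<Rightarrow> real list \<Rightarrow> bool" where
  "symplectic_eigenvalues S G nu \<longleftrightarrow> length nu = S \<and>
     (\<exists>A. symplectic S A \<and> G = A * williamson_diag S nu * transpose_mat A)"

definition edge_G :: "real list \<Rightarrow> nat \<Rightarrow> nat \<Rightarrow> bool" where
  "edge_G Lam i j \<longleftrightarrow> i < j \<and> j < length Lam \<and> Lam ! i * Lam ! j \<ge> 1"

definition pure_edge :: "real list \<Rightarrow> nat set \<Rightarrow> bool" where
  "pure_edge Lam e \<longleftrightarrow> (\<exists>i j. e = {i, j} \<and> i < j \<and> Lam ! i * Lam ! j = 1)"

definition perfect_matching :: "real list \<Rightarrow> nat set set \<Rightarrow> bool" where
  "perfect_matching Lam M \<longleftrightarrow>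
     (\<forall>e \<in> M. \<exists>i j. e = {i, j} \<and> edge_G Lam i j) \<and>
     (\<forall>v < length Lam. \<exists>!e. e \<in> M \<and> v \<in> e)"

definition matching_equiv :: "real list \<Rightarrow> nat set set \<Rightarrow> nat set set \<Rightarrow> bool" where
  "matching_equiv Lam M M' \<longleftrightarrow>
     (\<exists>\<sigma>. \<sigma> permutes {0..<length Lam} \<and> (\<forall>i < length Lam. Lam ! (\<sigma> i) = Lam ! i) \<and>
          M' = (\<lambda>e. \<sigma> ` e) ` M)"

definition unique_pairing :: "real list \<Rightarrow> bool" where
  "unique_pairing Lam \<longleftrightarrow> (\<exists>M. perfect_matching Lam M \<and>
      (\<forall>M'. perfect_matching Lam M' \<longrightarrow> matching_equiv Lam M M'))"

definition t_pure_unique_pairing :: "nat \<Rightarrow> real list \<Rightarrow> bool" where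
  "t_pure_unique_pairing t Lam \<longleftrightarrow> unique_pairing Lam \<and>
     (\<exists>M. perfect_matching Lam M \<and> card {e \<in> M. pure_edge Lam e} \<ge> t)"

end

theory Submission
  imports Defs
begin

definition prt :: "nat \<Rightarrow> nat" where "prt i = (if even i then Suc i else i - 1)"
definition om :: "nat \<Rightarrow> real" where "om i = (if even i then 1 else -1)"

lemma prt_lt: "i < 2*S \<Longrightarrow> prt i < 2*S"
  unfolding prt_def by presburger
lemma prt_prt[simp]: "prt (prt i) = i"
  unfolding prt_def by presburger
lemma prt_div[simp]: "prt i div 2 = i div 2"
  unfolding prt_def by presburger
lemma prt_neq: "prt i \<noteq> i"
  unfolding prt_def by presburger
lemma om_prt: "om (prt i) = - om i"
  unfolding prt_def om_def by auto
lemma prt_eq_iff: "(prt i = k) = (i = prt k)"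
  by (metis prt_prt)

lemma Omega_carrier[simp]: "Omega S \<in> carrier_mat (2*S) (2*S)"
  unfolding Omega_def by simp

lemma Omega_dims[simp]: "dim_row (Omega S) = 2*S" "dim_col (Omega S) = 2*S"
  unfolding Omega_def by auto

lemma Omega_idx: "i < 2*S \<Longrightarrow> j < 2*S \<Longrightarrow> Omega S $$ (i,j) = (if j = prt i then om i else 0)"
  unfolding Omega_def prt_def om_def by auto presburger+

definition tr :: "real mat \<Rightarrow> real" where "tr A = (\<Sum>i<dim_row A. A $$ (i,i))"

lemma tr_comm: assumes "A \<in> carrier_mat n m" "B \<in> carrier_mat m n"
  shows "tr (A * B) = tr (B * A)"
proof -
  have "tr (A*B) = (\<Sum>i<n. \<Sum>k<m. A $$ (i,k) * B $$ (k,i))"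
    using assms unfolding tr_def by (simp add: scalar_prod_def atLeast0LessThan)
  also have "\<dots> = (\<Sum>k<m. \<Sum>i<n. B $$ (k,i) * A $$ (i,k))"
    by (subst sum.swap) (simp add: mult.commute)
  also have "\<dots> = tr (B*A)"
    using assms unfolding tr_def by (simp add: scalar_prod_def atLeast0LessThan)
  finally show ?thesis .
qed

lemma sq_mult: "A \<in> carrier_mat n n \<Longrightarrow> B \<in> carrier_mat n n \<Longrightarrow> A * B \<in> carrier_mat n n"
  by auto

definition TT :: "nat \<Rightarrow> real mat \<Rightarrow> real" where
  "TT S G = tr (Omega S * G * Omega S * G)"

lemma TT_inv: assumes A: "symplectic S A" and G: "G \<in> carrier_mat (2*S) (2*S)"
  shows "TT S (A * G * transpose_mat A) = TT S G"
proof -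
  let ?O = "Omega S" and ?n = "2*S"
  have Ac: "A \<in> carrier_mat ?n ?n" and AO: "transpose_mat A * ?O * A = ?O" using A unfolding symplectic_def by auto
  have At: "transpose_mat A \<in> carrier_mat ?n ?n" using Ac by simp
  have key: "transpose_mat A * (?O * (A * X)) = ?O * X" if X: "X \<in> carrier_mat ?n ?n" for X
  proof -
    have "(transpose_mat A * ?O * A) * X = (transpose_mat A * ?O) * (A * X)"
      using Ac At X by (intro assoc_mult_mat[of _ ?n ?n _ ?n _ ?n]) auto
    also have "\<dots> = transpose_mat A * (?O * (A * X))"
      using Ac At X by (intro assoc_mult_mat[of _ ?n ?n _ ?n _ ?n]) auto
    finally have "transpose_mat A * (?O * (A * X)) = (transpose_mat A * ?O * A) * X" by simp
    then show ?thesis using AO by simp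
  qed
  let ?Z = "?O * A * G * transpose_mat A * ?O * A * G"
  have Zc: "?Z \<in> carrier_mat ?n ?n" using Ac At G by (meson mult_carrier_mat Omega_carrier)
  have "?O * (A * G * transpose_mat A) * ?O * (A * G * transpose_mat A) = ?Z * transpose_mat A"
    using Ac At G by (simp add: sq_mult assoc_mult_mat[of _ "2*S" "2*S" _ "2*S" _ "2*S"])
  then have "TT S (A * G * transpose_mat A) = tr (transpose_mat A * ?Z)"
    unfolding TT_def using tr_comm[OF Zc At] by simp
  also have "transpose_mat A * ?Z = ?O * G * ?O * G"
    using Ac At G key by (simp add: sq_mult assoc_mult_mat[of _ "2*S" "2*S" _ "2*S" _ "2*S"])
  finally show ?thesis unfolding TT_def .
qed

lemma sum_pairs: "(\<Sum>i<2*S. h i) = (\<Sum>k<S. h (2*k) + h (Suc (2*k)))"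
  for h :: "nat \<Rightarrow> 'a::comm_monoid_add"
  by (induction S) (simp_all add: ac_simps)

lemma Omega_mult_idx: assumes G: "G \<in> carrier_mat (2*S) nc" and i: "i < 2*S" and k: "k < nc"
  shows "(Omega S * G) $$ (i,k) = om i * G $$ (prt i, k)"
proof -
  have "(Omega S * G) $$ (i,k) = (\<Sum>l<2*S. Omega S $$ (i,l) * G $$ (l,k))"
    using G i k by (simp add: scalar_prod_def atLeast0LessThan)
  also have "\<dots> = (\<Sum>l<2*S. if l = prt i then om i * G $$ (l,k) else 0)"
    using i by (intro sum.cong) (auto simp: Omega_idx)
  also have "\<dots> = om i * G $$ (prt i, k)"
    using prt_lt[OF i] by simp
  finally show ?thesis .
qed

lemma TT_formula: assumes G: "G \<in> carrier_mat (2*S) (2*S)"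
  shows "TT S G = (\<Sum>i<2*S. \<Sum>k<2*S. (om i * G $$ (prt i, k)) * (om k * G $$ (prt k, i)))"
proof -
  have e: "Omega S * G * Omega S * G = (Omega S * G) * (Omega S * G)"
    using G by (simp add: sq_mult assoc_mult_mat[of _ "2*S" "2*S" _ "2*S" _ "2*S"])
  have "TT S G = (\<Sum>i<2*S. \<Sum>k<2*S. (Omega S * G) $$ (i,k) * (Omega S * G) $$ (k,i))"
    unfolding TT_def e tr_def using G by (simp add: scalar_prod_def atLeast0LessThan)
  also have "\<dots> = (\<Sum>i<2*S. \<Sum>k<2*S. (om i * G $$ (prt i, k)) * (om k * G $$ (prt k, i)))"
    using G by (intro sum.cong refl) (simp add: Omega_mult_idx del: index_mult_mat(1))
  finally show ?thesis .
qed

lemma TT_sparse: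
  assumes sp: "\<And>i k. i < 2*S \<Longrightarrow> k < 2*S \<Longrightarrow> k \<noteq> prt i \<Longrightarrow> g (prt i) k * g (prt k) i = 0"
  shows "TT S (mat (2*S) (2*S) (\<lambda>(i,j). g i j)) = - 2 * (\<Sum>k<S. g (2*k) (2*k) * g (Suc (2*k)) (Suc (2*k)))"
proof -
  let ?G = "mat (2*S) (2*S) (\<lambda>(i,j). g i j)"
  have "TT S ?G = (\<Sum>i<2*S. \<Sum>k<2*S. (om i * ?G $$ (prt i, k)) * (om k * ?G $$ (prt k, i)))"
    by (rule TT_formula) simp
  also have "\<dots> = (\<Sum>i<2*S. \<Sum>k<2*S. if k = prt i then - (g i i * g (prt i) (prt i)) else 0)"
  proof (intro sum.cong refl)
    fix i k assume i: "i \<in> {..<2*S}" and k: "k \<in> {..<2*S}"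
    have pi: "prt i < 2*S" "prt k < 2*S" using i k prt_lt by auto
    show "(om i * ?G $$ (prt i, k)) * (om k * ?G $$ (prt k, i)) =
       (if k = prt i then - (g i i * g (prt i) (prt i)) else 0)"
    proof (cases "k = prt i")
      case True
      then show ?thesis using i k pi by (simp add: om_prt) (simp add: om_def)
    next
      case False
      then show ?thesis using i k pi sp[of i k] by auto
    qed
  qed
  also have "\<dots> = (\<Sum>i<2*S. - (g i i * g (prt i) (prt i)))"
    using prt_lt by (intro sum.cong refl) simp
  also have "\<dots> = (\<Sum>k<S. - (g (2*k) (2*k) * g (Suc (2*k)) (Suc (2*k))) - (g (Suc (2*k)) (Suc (2*k)) * g (2*k) (2*k)))"
    by (subst sum_pairs) (simp add: prt_def)
  also have "\<dots> = - 2 * (\<Sum>k<S. g (2*k) (2*k) * g (Suc (2*k)) (Suc (2*k)))"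
    by (simp add: sum_distrib_left sum_negf[symmetric])
  finally show ?thesis .
qed

lemma TT_W: assumes "length nu = S"
  shows "TT S (williamson_diag S nu) = -2 * sum_list (map (\<lambda>x. x^2) nu)"
proof -
  have W: "williamson_diag S nu = mat (2*S) (2*S) (\<lambda>(i,j). (\<lambda>i j. if i = j then nu ! (i div 2) else 0) i j)"
    unfolding williamson_diag_def by simp
  have "TT S (williamson_diag S nu) = - 2 * (\<Sum>k<S. nu ! k * nu ! k)"
    unfolding W by (subst TT_sparse) (auto simp: prt_eq_iff)
  also have "(\<Sum>k<S. nu ! k * nu ! k) = sum_list (map (\<lambda>x. x^2) nu)"
    using assms by (simp add: sum_list_sum_nth atLeast0LessThan power2_eq_square)
  finally show ?thesis .
qed

lemma symp_TT: assumes "symplectic_eigenvalues S G nu"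
  shows "TT S G = -2 * sum_list (map (\<lambda>x. x^2) nu)"
proof -
  obtain A where A: "symplectic S A" "G = A * williamson_diag S nu * transpose_mat A" and l: "length nu = S"
    using assms unfolding symplectic_eigenvalues_def by auto
  have "TT S G = TT S (williamson_diag S nu)"
    unfolding A by (rule TT_inv[OF A(1)]) (simp add: williamson_diag_def)
  then show ?thesis using TT_W[OF l] by simp
qed

lemma symp_mset: assumes "symplectic_eigenvalues S G1 nu1" "symplectic_eigenvalues S G2 nu2"
  "TT S G1 \<noteq> TT S G2" shows "mset nu1 \<noteq> mset nu2"
proof
  assume "mset nu1 = mset nu2"
  then have "sum_list (map (\<lambda>x. x^2) nu1) = sum_list (map (\<lambda>x. x^2) nu2)"
    by (metis mset_map sum_mset_sum_list)
  then show False using assms symp_TT by metis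
qed

definition rot :: "nat \<Rightarrow> nat \<Rightarrow> nat \<Rightarrow> real \<Rightarrow> real \<Rightarrow> real mat" where
  "rot n u v c s = mat n n (\<lambda>(i,j). if i = j then (if i = u \<or> i = v then c else 1)
     else if i = u \<and> j = v then -s else if i = v \<and> j = u then s else 0)"

lemma rot_carrier[simp]: "rot n u v c s \<in> carrier_mat n n"
  unfolding rot_def by simp
lemma rot_dims[simp]: "dim_row (rot n u v c s) = n" "dim_col (rot n u v c s) = n"
  unfolding rot_def by auto

lemma rot_transpose: "u \<noteq> v \<Longrightarrow> transpose_mat (rot n u v c s) = rot n u v c (-s)"
  unfolding rot_def by (rule eq_matI) auto

lemma rot_left: assumes X: "X \<in> carrier_mat n nc" and i: "i < n" and j: "j < nc"
  and uv: "u < n" "v < n" "u \<noteq> v"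
  shows "(rot n u v c s * X) $$ (i,j) = (if i = u then c * X $$ (u,j) - s * X $$ (v,j)
      else if i = v then s * X $$ (u,j) + c * X $$ (v,j) else X $$ (i,j))"
proof -
  have "(rot n u v c s * X) $$ (i,j) = (\<Sum>l<n. rot n u v c s $$ (i,l) * X $$ (l,j))"
    using X i j by (simp add: scalar_prod_def atLeast0LessThan)
  also have "\<dots> = (\<Sum>l<n. (if l = u then (if i = u then c else if i = v then s else 0) * X $$ (u,j) else 0)
     + (if l = v then (if i = u then -s else if i = v then c else 0) * X $$ (v,j) else 0)
     + (if l = i \<and> i \<noteq> u \<and> i \<noteq> v then X $$ (i,j) else 0))"
    using i uv by (intro sum.cong refl) (auto simp: rot_def)
  also have "\<dots> = (if i = u then c * X $$ (u,j) - s * X $$ (v,j)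
      else if i = v then s * X $$ (u,j) + c * X $$ (v,j) else X $$ (i,j))"
    using i uv by (simp add: sum.distrib)
  finally show ?thesis .
qed

lemma rot_right: assumes X: "X \<in> carrier_mat nr n" and i: "i < nr" and j: "j < n"
  and uv: "u < n" "v < n" "u \<noteq> v"
  shows "(X * rot n u v c s) $$ (i,j) = (if j = u then c * X $$ (i,u) + s * X $$ (i,v)
      else if j = v then - s * X $$ (i,u) + c * X $$ (i,v) else X $$ (i,j))"
proof -
  have "(X * rot n u v c s) $$ (i,j) = (\<Sum>l<n. X $$ (i,l) * rot n u v c s $$ (l,j))"
    using X i j by (simp add: scalar_prod_def atLeast0LessThan)
  also have "\<dots> = (\<Sum>l<n. (if l = u then (if j = u then c else if j = v then -s else 0) * X $$ (i,u) else 0)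
     + (if l = v then (if j = u then s else if j = v then c else 0) * X $$ (i,v) else 0)
     + (if l = j \<and> j \<noteq> u \<and> j \<noteq> v then X $$ (i,j) else 0))"
    using j uv by (intro sum.cong refl) (auto simp: rot_def)
  also have "\<dots> = (if j = u then c * X $$ (i,u) + s * X $$ (i,v)
      else if j = v then - s * X $$ (i,u) + c * X $$ (i,v) else X $$ (i,j))"
    using j uv by (simp add: sum.distrib)
  finally show ?thesis .
qed

lemma rot_left_sq: "X \<in> carrier_mat n n \<Longrightarrow> i < n \<Longrightarrow> j < n \<Longrightarrow> u < n \<Longrightarrow> v < n \<Longrightarrow> u \<noteq> v \<Longrightarrow>
  (rot n u v c s * X) $$ (i,j) = (if i = u then c * X $$ (u,j) - s * X $$ (v,j)
      else if i = v then s * X $$ (u,j) + c * X $$ (v,j) else X $$ (i,j))"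
  by (rule rot_left)
lemma rot_right_sq: "X \<in> carrier_mat n n \<Longrightarrow> i < n \<Longrightarrow> j < n \<Longrightarrow> u < n \<Longrightarrow> v < n \<Longrightarrow> u \<noteq> v \<Longrightarrow>
  (X * rot n u v c s) $$ (i,j) = (if j = u then c * X $$ (i,u) + s * X $$ (i,v)
      else if j = v then - s * X $$ (i,u) + c * X $$ (i,v) else X $$ (i,j))"
  by (rule rot_right)

lemma rot_orth: assumes uv: "u < n" "v < n" "u \<noteq> v" and cs: "c^2 + s^2 = 1"
  shows "rot n u v c (-s) * rot n u v c s = 1\<^sub>m n" "rot n u v c s * rot n u v c (-s) = 1\<^sub>m n"
proof -
  show "rot n u v c (-s) * rot n u v c s = 1\<^sub>m n"
    using uv cs
    by (intro eq_matI) ((simp_all add: rot_left_sq del: index_mult_mat(1)), (auto simp: rot_def power2_eq_square))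
  show "rot n u v c s * rot n u v c (-s) = 1\<^sub>m n"
    using uv cs
    by (intro eq_matI) ((simp_all add: rot_left_sq del: index_mult_mat(1)), (auto simp: rot_def power2_eq_square))
qed

definition dg :: "nat \<Rightarrow> (nat \<Rightarrow> real) \<Rightarrow> real mat" where
  "dg n d = mat n n (\<lambda>(i,j). if i = j then d i else 0)"

lemma dg_carrier[simp]: "dg n d \<in> carrier_mat n n" unfolding dg_def by simp
lemma dg_dims[simp]: "dim_row (dg n d) = n" "dim_col (dg n d) = n" unfolding dg_def by auto

definition g2 :: "nat \<Rightarrow> nat \<Rightarrow> real \<Rightarrow> real \<Rightarrow> (nat \<Rightarrow> real) \<Rightarrow> nat \<Rightarrow> nat \<Rightarrow> real" where
  "g2 u v c s d i j = (if i = u \<and> j = u then c^2 * d u + s^2 * d v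
     else if i = v \<and> j = v then s^2 * d u + c^2 * d v
     else if (i = u \<and> j = v) \<or> (i = v \<and> j = u) then c * s * (d u - d v)
     else if i = j then d i else 0)"

lemma G2_eq: assumes uv: "u < n" "v < n" "u \<noteq> v"
  shows "mat n n (\<lambda>(i,j). g2 u v c s d i j) = rot n u v c s * dg n d * transpose_mat (rot n u v c s)"
proof -
  have c1: "rot n u v c s * dg n d \<in> carrier_mat n n" by (simp add: sq_mult)
  show ?thesis
    unfolding rot_transpose[OF uv(3)]
    using uv c1
    by (intro eq_matI) ((simp_all add: rot_left_sq rot_right_sq del: index_mult_mat(1)),
       (auto simp: g2_def dg_def power2_eq_square algebra_simps))
qed

lemma g2_off: "a \<noteq> b \<Longrightarrow> g2 u v c s d a b \<noteq> 0 \<Longrightarrow> (a = u \<and> b = v) \<or> (a = v \<and> b = u)"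
  unfolding g2_def by (auto split: if_splits)

lemma prt_dest: "prt i = k \<Longrightarrow> i = prt k" by auto

lemma g2_sparse: assumes "u div 2 \<noteq> v div 2" "k \<noteq> prt i"
  shows "g2 u v c s d (prt i) k * g2 u v c s d (prt k) i = 0"
proof -
  have "u \<noteq> v" "prt u \<noteq> v" "prt v \<noteq> u" using assms(1) prt_div[of u] prt_div[of v] by auto
  moreover have "k \<noteq> prt i" "prt k \<noteq> i" using assms(2) by auto
  ultimately show ?thesis using prt_neq[of v] prt_neq[of u] g2_off[of "prt i" k u v c s d] g2_off[of "prt k" i u v c s d]
    by fastforce
qed

lemma g2_mode: assumes "u div 2 \<noteq> v div 2"
  shows "g2 u v c s d (2*k) (2*k) * g2 u v c s d (Suc (2*k)) (Suc (2*k)) =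
    (if k = u div 2 then g2 u v c s d u u * d (prt u)
     else if k = v div 2 then g2 u v c s d v v * d (prt v) else d (2*k) * d (Suc (2*k)))"
proof -
  have "u \<noteq> v" "prt u \<noteq> v" "prt v \<noteq> u" using assms(1) prt_div[of u] prt_div[of v] by auto
  note g2d = g2_def[of u v c s d]
  have diag: "g2 u v c s d j j = d j" if "j \<noteq> u" "j \<noteq> v" for j using that unfolding g2d by auto
  show ?thesis
  proof (cases "k = u div 2")
    case True
    then have kv: "k \<noteq> v div 2" using assms by auto
    have "2*k \<noteq> v" "Suc (2*k) \<noteq> v" using kv by auto
    moreover have "u = 2*k \<or> u = Suc (2*k)" using True by presburger
    ultimately show ?thesis
    proof (elim disjE)
      assume h: "2*k \<noteq> v" "Suc (2*k) \<noteq> v" "u = 2*k"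
      then have "prt u = Suc (2*k)" by (simp add: prt_def)
      then show ?thesis using h True[symmetric] diag[of "Suc (2*k)"] by simp
    next
      assume h: "2*k \<noteq> v" "Suc (2*k) \<noteq> v" "u = Suc (2*k)"
      then have "prt u = 2*k" by (simp add: prt_def)
      then show ?thesis using h True[symmetric] diag[of "2*k"] by simp
    qed
  next
    case False
    note F = False
    show ?thesis
    proof (cases "k = v div 2")
      case True
      have "2*k \<noteq> u" "Suc (2*k) \<noteq> u" using F by auto
      moreover have "v = 2*k \<or> v = Suc (2*k)" using True by presburger
      ultimately show ?thesis
      proof (elim disjE)
        assume h: "2*k \<noteq> u" "Suc (2*k) \<noteq> u" "v = 2*k"
        then have "prt v = Suc (2*k)" by (simp add: prt_def)
        then show ?thesis using h True[symmetric] F diag[of "Suc (2*k)"] by simp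
      next
        assume h: "2*k \<noteq> u" "Suc (2*k) \<noteq> u" "v = Suc (2*k)"
        then have "prt v = 2*k" by (simp add: prt_def)
        then show ?thesis using h True[symmetric] F diag[of "2*k"] by (simp add: mult.commute)
      qed
    next
      case False
      have "2*k \<noteq> u" "Suc (2*k) \<noteq> u" "2*k \<noteq> v" "Suc (2*k) \<noteq> v" using F False by auto
      then show ?thesis using F False diag by auto
    qed
  qed
qed

lemma TT_g2: assumes "u < 2*S" "v < 2*S" "u div 2 \<noteq> v div 2"
  shows "TT S (mat (2*S) (2*S) (\<lambda>(i,j). g2 u v c s d i j)) =
    - 2 * (\<Sum>k<S. (if k = u div 2 then g2 u v c s d u u * d (prt u)
     else if k = v div 2 then g2 u v c s d v v * d (prt v) else d (2*k) * d (Suc (2*k))))"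
  using assms by (subst TT_sparse) (auto simp: g2_sparse g2_mode)

lemma cs_aux: "c^2 + s^2 = 1 \<Longrightarrow> x * (y * c^2) + x * (y * s^2) = (x * y::real)"
  by (metis distrib_left mult_1_right)

lemma TT_diff: assumes uv: "u < 2*S" "v < 2*S" "u div 2 \<noteq> v div 2" and cs: "c^2 + s^2 = 1"
  shows "TT S (mat (2*S) (2*S) (\<lambda>(i,j). g2 u v c s d i j)) - TT S (mat (2*S) (2*S) (\<lambda>(i,j). g2 u v 1 0 d i j))
     = - 2 * (s^2 * (d v - d u) * (d (prt u) - d (prt v)))"
proof -
  let ?m = "u div 2" and ?n = "v div 2"
  have mn: "?m < S" "?n < S" using uv by auto
  have uv': "u \<noteq> v" using uv by auto
  have c2: "c^2 = 1 - s^2" using cs by simp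
  have gu: "g2 u v c s d u u = d u - s^2 * d u + s^2 * d v" by (simp add: g2_def c2 left_diff_distrib)
  have gu1: "g2 u v 1 0 d u u = d u" by (simp add: g2_def)
  have gv: "g2 u v c s d v v = s^2 * d u + d v - s^2 * d v" using uv' by (simp add: g2_def c2 left_diff_distrib)
  have gv1: "g2 u v 1 0 d v v = d v" using uv' by (simp add: g2_def)
  let ?X = "s^2 * (d v - d u) * d (prt u)" and ?Y = "s^2 * (d u - d v) * d (prt v)"
  have "TT S (mat (2*S) (2*S) (\<lambda>(i,j). g2 u v c s d i j)) - TT S (mat (2*S) (2*S) (\<lambda>(i,j). g2 u v 1 0 d i j))
    = - 2 * (\<Sum>k<S. (if k = ?m then ?X else 0) + (if k = ?n then ?Y else 0))"
    unfolding TT_g2[OF uv] sum_subtractf[symmetric] right_diff_distrib[symmetric]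
    using uv' uv(3) by (intro arg_cong[where f="\<lambda>x. -2 * x"] sum.cong refl) (auto simp only: gu gu1 gv gv1 if_True if_False; simp add: algebra_simps)
  also have "\<dots> = - 2 * (?X + ?Y)" using mn by (simp add: sum.distrib)
  finally show ?thesis by (simp add: algebra_simps)
qed

definition mf :: "real \<Rightarrow> real \<Rightarrow> complex \<Rightarrow> complex \<Rightarrow> real" where
  "mf a b x y = a * (cmod x)^2 + b * (cmod y)^2 - 2 * Im (cnj x * y)"

lemma Im_cnj_le: "Im (cnj x * y) \<le> cmod x * cmod y"
  by (metis abs_Im_le_cmod abs_le_D1 complex_mod_cnj norm_mult)

lemma mf_nonneg: assumes "a > 0" "a * b \<ge> 1" shows "mf a b x y \<ge> 0"
proof -
  let ?X = "cmod x" and ?Y = "cmod y"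
  have "a * (a * ?X^2 + b * ?Y^2 - 2 * ?X * ?Y) = (a * ?X - ?Y)^2 + (a*b - 1) * ?Y^2"
    by (simp add: algebra_simps power2_eq_square)
  also have "\<dots> \<ge> 0" using assms by simp
  finally have "a * ?X^2 + b * ?Y^2 - 2 * ?X * ?Y \<ge> 0" using assms(1) by (simp add: zero_le_mult_iff)
  then show ?thesis using Im_cnj_le[of x y] unfolding mf_def by linarith
qed

lemma mf_lb1: assumes "b > 0" shows "mf a b x y \<ge> (a - 1/b) * (cmod x)^2"
proof -
  let ?X = "cmod x" and ?Y = "cmod y"
  have "b * (a * ?X^2 + b * ?Y^2 - 2 * ?X * ?Y - (a - 1/b) * ?X^2) = (b * ?Y - ?X)^2"
    using assms by (simp add: algebra_simps power2_eq_square)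
  then have "b * (a * ?X^2 + b * ?Y^2 - 2 * ?X * ?Y - (a - 1/b) * ?X^2) \<ge> 0" by simp
  then have "a * ?X^2 + b * ?Y^2 - 2 * ?X * ?Y - (a - 1/b) * ?X^2 \<ge> 0" using assms by (simp add: zero_le_mult_iff)
  then show ?thesis using Im_cnj_le[of x y] unfolding mf_def by linarith
qed

lemma mf_lb2: assumes "a > 0" shows "mf a b x y \<ge> (b - 1/a) * (cmod y)^2"
proof -
  let ?X = "cmod x" and ?Y = "cmod y"
  have "a * (a * ?X^2 + b * ?Y^2 - 2 * ?X * ?Y - (b - 1/a) * ?Y^2) = (a * ?X - ?Y)^2"
    using assms by (simp add: algebra_simps power2_eq_square)
  then have "a * (a * ?X^2 + b * ?Y^2 - 2 * ?X * ?Y - (b - 1/a) * ?Y^2) \<ge> 0" by simp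
  then have "a * ?X^2 + b * ?Y^2 - 2 * ?X * ?Y - (b - 1/a) * ?Y^2 \<ge> 0" using assms by (simp add: zero_le_mult_iff)
  then show ?thesis using Im_cnj_le[of x y] unfolding mf_def by linarith
qed

lemma cmod_sq: "cmod x * cmod x = Re x * Re x + Im x * Im x"
  by (metis cmod_power2 power2_eq_square)

lemma mf_complex: "complex_of_real a * (cnj x * x) + complex_of_real b * (cnj y * y)
   + \<i> * complex_of_real 1 * (cnj x * y) + \<i> * complex_of_real (-1) * (cnj y * x) = complex_of_real (mf a b x y)"
  unfolding mf_def by (simp add: complex_eq_iff cmod_sq algebra_simps power2_eq_square)

lemma B_complex: "complex_of_real B * (cnj x * y) + complex_of_real B * (cnj y * x) = complex_of_real (2 * B * Re (cnj x * y))"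
  by (simp add: complex_eq_iff algebra_simps)

definition MM :: "nat \<Rightarrow> (nat \<Rightarrow> nat \<Rightarrow> real) \<Rightarrow> complex mat" where
  "MM S g = map_mat complex_of_real (mat (2*S) (2*S) (\<lambda>(i,j). g i j)) + \<i> \<cdot>\<^sub>m map_mat complex_of_real (Omega S)"

lemma MM_carrier[simp]: "MM S g \<in> carrier_mat (2*S) (2*S)"
  unfolding MM_def by simp

lemma MM_dims[simp]: "dim_row (MM S g) = 2*S" "dim_col (MM S g) = 2*S"
  unfolding MM_def by auto

lemma MM_idx: assumes i: "i < 2*S" and j: "j < 2*S"
  shows "MM S g $$ (i,j) = complex_of_real (g i j) + \<i> * complex_of_real (if j = prt i then om i else 0)"
  using i j unfolding MM_def by (simp add: Omega_idx)

lemma MMv_idx: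
  assumes w: "w \<in> carrier_vec (2*S)" and i: "i < 2*S" and uv: "u \<noteq> v" and uvl: "u < 2*S" "v < 2*S"
  and off: "\<And>i j. i < 2*S \<Longrightarrow> j < 2*S \<Longrightarrow> i \<noteq> j \<Longrightarrow> (i = u \<and> j = v) \<or> (i = v \<and> j = u) \<or> g i j = 0"
  and gB: "g u v = B" "g v u = B"
  shows "(MM S g *\<^sub>v w) $ i = complex_of_real (g i i) * w $ i
     + (if i = u then complex_of_real B * w $ v else 0) + (if i = v then complex_of_real B * w $ u else 0)
     + \<i> * complex_of_real (om i) * w $ prt i"
proof -
  have "(MM S g *\<^sub>v w) $ i = (\<Sum>j<2*S. MM S g $$ (i,j) * w $ j)"
    using w i by (simp add: scalar_prod_def atLeast0LessThan)
  also have "\<dots> = (\<Sum>j<2*S. (if j = i then complex_of_real (g i i) * w $ i else 0)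
     + (if i = u \<and> j = v then complex_of_real B * w $ v else 0) + (if i = v \<and> j = u then complex_of_real B * w $ u else 0)
     + (if j = prt i then \<i> * complex_of_real (om i) * w $ prt i else 0))"
  proof (intro sum.cong refl)
    fix j assume j: "j \<in> {..<2*S}"
    show "MM S g $$ (i,j) * w $ j = (if j = i then complex_of_real (g i i) * w $ i else 0)
     + (if i = u \<and> j = v then complex_of_real B * w $ v else 0) + (if i = v \<and> j = u then complex_of_real B * w $ u else 0)
     + (if j = prt i then \<i> * complex_of_real (om i) * w $ prt i else 0)"
    proof (cases "j = i")
      case True then show ?thesis using i uv prt_neq[of i] by (auto simp: MM_idx)
    next
      case False then show ?thesis using i j uv off[of i j] gB
        by (auto simp: MM_idx distrib_right)
    qed
  qed
  also have "\<dots> = complex_of_real (g i i) * w $ i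
     + (if i = u then complex_of_real B * w $ v else 0) + (if i = v then complex_of_real B * w $ u else 0)
     + \<i> * complex_of_real (om i) * w $ prt i"
    using i prt_lt[OF i] uvl by (simp add: sum.distrib)
  finally show ?thesis .
qed

definition mfk :: "(nat \<Rightarrow> nat \<Rightarrow> real) \<Rightarrow> complex vec \<Rightarrow> nat \<Rightarrow> real" where
  "mfk g w k = mf (g (2*k) (2*k)) (g (Suc (2*k)) (Suc (2*k))) (w $ (2*k)) (w $ Suc (2*k))"

lemma MM_form:
  assumes w: "w \<in> carrier_vec (2*S)" and uv: "u \<noteq> v" and uvl: "u < 2*S" "v < 2*S"
  and off: "\<And>i j. i < 2*S \<Longrightarrow> j < 2*S \<Longrightarrow> i \<noteq> j \<Longrightarrow> (i = u \<and> j = v) \<or> (i = v \<and> j = u) \<or> g i j = 0"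
  and gB: "g u v = B" "g v u = B"
  shows "conjugate w \<bullet> (MM S g *\<^sub>v w) = complex_of_real ((\<Sum>k<S. mfk g w k) + 2 * B * Re (cnj (w $ u) * w $ v))"
proof -
  have "conjugate w \<bullet> (MM S g *\<^sub>v w) = (\<Sum>i<2*S. cnj (w $ i) * (MM S g *\<^sub>v w) $ i)"
    using w by (simp add: scalar_prod_def atLeast0LessThan)
  also have "\<dots> = (\<Sum>i<2*S. (complex_of_real (g i i) * (cnj (w $ i) * w $ i) + \<i> * complex_of_real (om i) * (cnj (w $ i) * w $ prt i))
     + (if i = u then complex_of_real B * (cnj (w $ u) * w $ v) else 0) + (if i = v then complex_of_real B * (cnj (w $ v) * w $ u) else 0))"
  proof (intro sum.cong refl)
    fix i assume "i \<in> {..<2*S}"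
    then have i: "i < 2*S" by simp
    show "cnj (w $ i) * (MM S g *\<^sub>v w) $ i = (complex_of_real (g i i) * (cnj (w $ i) * w $ i) + \<i> * complex_of_real (om i) * (cnj (w $ i) * w $ prt i))
     + (if i = u then complex_of_real B * (cnj (w $ u) * w $ v) else 0) + (if i = v then complex_of_real B * (cnj (w $ v) * w $ u) else 0)"
      using uv by (subst MMv_idx[OF w i uv uvl off gB]) (auto simp: algebra_simps)
  qed
  also have "\<dots> = (\<Sum>i<2*S. complex_of_real (g i i) * (cnj (w $ i) * w $ i) + \<i> * complex_of_real (om i) * (cnj (w $ i) * w $ prt i))
     + (complex_of_real B * (cnj (w $ u) * w $ v) + complex_of_real B * (cnj (w $ v) * w $ u))"
    using uvl by (simp add: sum.distrib)
  also have "(\<Sum>i<2*S. complex_of_real (g i i) * (cnj (w $ i) * w $ i) + \<i> * complex_of_real (om i) * (cnj (w $ i) * w $ prt i))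
     = (\<Sum>k<S. complex_of_real (mfk g w k))"
    unfolding sum_pairs
  proof (intro sum.cong refl)
    fix k
    show "complex_of_real (g (2*k) (2*k)) * (cnj (w $ (2*k)) * w $ (2*k)) + \<i> * complex_of_real (om (2*k)) * (cnj (w $ (2*k)) * w $ prt (2*k)) +
        (complex_of_real (g (Suc (2*k)) (Suc (2*k))) * (cnj (w $ Suc (2*k)) * w $ Suc (2*k)) + \<i> * complex_of_real (om (Suc (2*k))) * (cnj (w $ Suc (2*k)) * w $ prt (Suc (2*k))))
       = complex_of_real (mfk g w k)"
      unfolding mfk_def mf_complex[symmetric] by (simp add: prt_def om_def)
  qed
  also have "complex_of_real B * (cnj (w $ u) * w $ v) + complex_of_real B * (cnj (w $ v) * w $ u)
     = complex_of_real (2 * B * Re (cnj (w $ u) * w $ v))" by (rule B_complex)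
  finally show ?thesis by simp
qed

lemma mfk_lb: assumes k: "k = u div 2" and p1: "g u u > 0" and p2: "g (prt u) (prt u) > 0"
  shows "mfk g w k \<ge> (g u u - 1 / g (prt u) (prt u)) * (cmod (w $ u))^2"
proof (cases "even u")
  case True
  then have "u = 2*k" "prt u = Suc (2*k)" using k by (auto simp: prt_def)
  then show ?thesis using mf_lb1[OF p2] unfolding mfk_def by simp
next
  case False
  then have "u = Suc (2*k)" "prt u = 2*k" using k by (auto simp: prt_def)
  then show ?thesis using mf_lb2[OF p2] unfolding mfk_def by simp
qed

lemma final_ineq: assumes "P \<ge> 0" "R \<ge> 0" "B^2 \<le> P * R" "\<bar>z\<bar> \<le> x * y" "x \<ge> 0" "y \<ge> 0"
  shows "P * x^2 + R * y^2 + 2 * B * z \<ge> (0::real)"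
proof -
  have z: "2 * B * z \<ge> - 2 * \<bar>B\<bar> * (x * y)"
  proof -
    have "\<bar>B * z\<bar> \<le> \<bar>B\<bar> * (x*y)" using assms(4) by (simp add: abs_mult mult_left_mono)
    then show ?thesis by linarith
  qed
  have "P * x^2 + R * y^2 - 2 * \<bar>B\<bar> * (x * y) \<ge> 0"
  proof (cases "P = 0")
    case True
    then have "B = 0" using assms(3) by simp
    then show ?thesis using True assms by simp
  next
    case False
    then have Pp: "P > 0" using assms(1) by simp
    have "P * (P * x^2 + R * y^2 - 2 * \<bar>B\<bar> * (x * y)) = (P * x - \<bar>B\<bar> * y)^2 + (P * R - B^2) * y^2"
      by (simp add: algebra_simps power2_eq_square)
    also have "\<dots> \<ge> 0" using assms(3) by simp
    finally show ?thesis using Pp by (simp add: zero_le_mult_iff)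
  qed
  then show ?thesis using z by linarith
qed

lemma psd_MM:
  assumes uvl: "u < 2*S" "v < 2*S" and uvd: "u div 2 \<noteq> v div 2"
  and off: "\<And>i j. i < 2*S \<Longrightarrow> j < 2*S \<Longrightarrow> i \<noteq> j \<Longrightarrow> (i = u \<and> j = v) \<or> (i = v \<and> j = u) \<or> g i j = 0"
  and gB: "g u v = B" "g v u = B"
  and pos: "\<And>i. i < 2*S \<Longrightarrow> g i i > 0"
  and modes: "\<And>k. k < S \<Longrightarrow> k \<noteq> u div 2 \<Longrightarrow> k \<noteq> v div 2 \<Longrightarrow> g (2*k) (2*k) * g (Suc (2*k)) (Suc (2*k)) \<ge> 1"
  and P: "g u u - 1 / g (prt u) (prt u) \<ge> 0" and R: "g v v - 1 / g (prt v) (prt v) \<ge> 0"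
  and PR: "B^2 \<le> (g u u - 1 / g (prt u) (prt u)) * (g v v - 1 / g (prt v) (prt v))"
  shows "psd_complex (2*S) (MM S g)"
  unfolding psd_complex_def
proof (intro conjI ballI MM_carrier)
  fix w :: "complex vec" assume w: "w \<in> carrier_vec (2*S)"
  have uv: "u \<noteq> v" using uvd by auto
  let ?m = "u div 2" and ?n = "v div 2"
  have mn: "?m < S" "?n < S" using uvl by auto
  let ?X = "(\<Sum>k<S. mfk g w k) + 2 * B * Re (cnj (w $ u) * w $ v)"
  have form: "conjugate w \<bullet> (MM S g *\<^sub>v w) = complex_of_real ?X"
    by (rule MM_form[OF w uv uvl off gB])
  show "Im (conjugate w \<bullet> (MM S g *\<^sub>v w)) = 0" unfolding form by simp
  have "(\<Sum>k<S. mfk g w k) = (\<Sum>k<S. (if k = ?m then mfk g w ?m else 0) + (if k = ?n then mfk g w ?n else 0)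
     + (if k \<noteq> ?m \<and> k \<noteq> ?n then mfk g w k else 0))"
    using uvd by (intro sum.cong refl) auto
  also have "\<dots> = mfk g w ?m + mfk g w ?n + (\<Sum>k<S. if k \<noteq> ?m \<and> k \<noteq> ?n then mfk g w k else 0)"
    using mn by (simp add: sum.distrib)
  finally have eqs: "(\<Sum>k<S. mfk g w k) = mfk g w ?m + mfk g w ?n + (\<Sum>k<S. if k \<noteq> ?m \<and> k \<noteq> ?n then mfk g w k else 0)" .
  have "(\<Sum>k<S. if k \<noteq> ?m \<and> k \<noteq> ?n then mfk g w k else 0) \<ge> 0"
  proof (intro sum_nonneg)
    fix k assume k: "k \<in> {..<S}"
    show "(if k \<noteq> ?m \<and> k \<noteq> ?n then mfk g w k else 0) \<ge> 0"
      using k pos[of "2*k"] modes[of k] unfolding mfk_def by (auto intro!: mf_nonneg)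
  qed
  then have s1: "(\<Sum>k<S. mfk g w k) \<ge> mfk g w ?m + mfk g w ?n" using eqs by linarith
  have pu: "g (prt u) (prt u) > 0" "g (prt v) (prt v) > 0" using pos prt_lt uvl by auto
  have l1: "mfk g w ?m \<ge> (g u u - 1 / g (prt u) (prt u)) * (cmod (w $ u))^2"
    by (rule mfk_lb) (use pos uvl pu in auto)
  have l2: "mfk g w ?n \<ge> (g v v - 1 / g (prt v) (prt v)) * (cmod (w $ v))^2"
    by (rule mfk_lb) (use pos uvl pu in auto)
  have zb: "\<bar>Re (cnj (w $ u) * w $ v)\<bar> \<le> cmod (w $ u) * cmod (w $ v)"
    by (metis abs_Re_le_cmod complex_mod_cnj norm_mult)
  have "?X \<ge> 0"
    using final_ineq[OF P R PR zb norm_ge_zero norm_ge_zero] s1 l1 l2 by linarith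
  then show "Re (conjugate w \<bullet> (MM S g *\<^sub>v w)) \<ge> 0" unfolding form by simp
qed

lemma mat_vec_zero: "A \<in> carrier_mat m n \<Longrightarrow> A *\<^sub>v 0\<^sub>v n = (0\<^sub>v m :: 'a::comm_ring_1 vec)"
  by (intro eq_vecI) (auto simp: scalar_prod_def)

lemma sum_if_mult: "x < (n::nat) \<Longrightarrow> (\<Sum>i<n. (if x = i then a else 0) * f i) = (a * f x :: real)"
proof -
  assume x: "x < n"
  have "(\<Sum>i<n. (if x = i then a else 0) * f i) = (\<Sum>i<n. if i = x then a * f x else 0)"
    by (intro sum.cong) auto
  also have "\<dots> = a * f x" using x by (subst sum.delta) simp_all
  finally show ?thesis .
qed

lemma dg_posdef: assumes dpos: "\<And>i. i < n \<Longrightarrow> d i > 0" and w: "w \<in> carrier_vec n" and w0: "w \<noteq> 0\<^sub>v n"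
  shows "w \<bullet> (dg n d *\<^sub>v w) > 0"
proof -
  obtain i where i: "i < n" "w $ i \<noteq> 0" using w w0 by (metis carrier_vecD eq_vecI index_zero_vec(1,2))
  have "w \<bullet> (dg n d *\<^sub>v w) = (\<Sum>j<n. d j * (w $ j)^2)"
  proof -
    have "w \<bullet> (dg n d *\<^sub>v w) = (\<Sum>j<n. w $ j * (dg n d *\<^sub>v w) $ j)"
      using w by (simp add: scalar_prod_def atLeast0LessThan)
    also have "\<dots> = (\<Sum>j<n. w $ j * (\<Sum>l<n. (if l = j then d j * w $ j else 0)))"
      using w by (intro sum.cong refl) (auto simp: dg_def scalar_prod_def atLeast0LessThan sum_if_mult)
    also have "\<dots> = (\<Sum>j<n. d j * (w $ j)^2)"
      by (simp add: power2_eq_square mult.left_commute)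
    finally show ?thesis .
  qed
  also have "\<dots> > 0"
  proof (rule sum_pos2[where i=i])
    show "finite {..<n}" by simp
    show "i \<in> {..<n}" using i by simp
    show "0 < d i * (w $ i)^2" using i dpos[of i] by simp
    show "\<And>j. j \<in> {..<n} \<Longrightarrow> 0 \<le> d j * (w $ j)^2"
    proof -
      fix j assume "j \<in> {..<n}"
      then have "d j > 0" using dpos by simp
      then show "0 \<le> d j * (w $ j)^2" by simp
    qed
  qed
  finally show ?thesis .
qed

lemma g2_offd: "i \<noteq> j \<Longrightarrow> g2 u v c s d i j = (if (i = u \<and> j = v) \<or> (i = v \<and> j = u) then c * s * (d u - d v) else 0)"
  unfolding g2_def by simp

lemma g2_sym: "g2 u v c s d i j = g2 u v c s d j i"
proof (cases "i = j")
  case False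
  then show ?thesis unfolding g2_offd[OF False] g2_offd[OF False[symmetric]] by (simp add: conj_commute disj_commute)
qed simp

lemma quantum_g2:
  assumes uvl: "u < 2*S" "v < 2*S" and uvd: "u div 2 \<noteq> v div 2" and cs: "c^2 + s^2 = 1"
  and dpos: "\<And>i. i < 2*S \<Longrightarrow> d i > 0"
  and dmodes: "\<And>k. k < S \<Longrightarrow> d (2*k) * d (Suc (2*k)) \<ge> 1"
  and P: "g2 u v c s d u u - 1 / d (prt u) \<ge> 0" and R: "g2 u v c s d v v - 1 / d (prt v) \<ge> 0"
  and PR: "(c * s * (d u - d v))^2 \<le> (g2 u v c s d u u - 1 / d (prt u)) * (g2 u v c s d v v - 1 / d (prt v))"
  shows "quantum_CM S (mat (2*S) (2*S) (\<lambda>(i,j). g2 u v c s d i j))"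
proof -
  let ?g = "g2 u v c s d" and ?G = "mat (2*S) (2*S) (\<lambda>(i,j). g2 u v c s d i j)"
  have uv: "u \<noteq> v" using uvd by auto
  have pu: "prt u \<noteq> u" "prt u \<noteq> v" "prt v \<noteq> u" "prt v \<noteq> v"
    using uvd prt_neq[of u] prt_neq[of v] prt_div[of u] prt_div[of v] by auto
  have gp: "?g (prt u) (prt u) = d (prt u)" "?g (prt v) (prt v) = d (prt v)"
    using pu unfolding g2_def by auto
  have dpu: "d (prt u) > 0" "d (prt v) > 0" using dpos prt_lt uvl by auto
  have gpos: "?g i i > 0" if i: "i < 2*S" for i
  proof -
    consider "i = u" | "i = v" | "i \<noteq> u \<and> i \<noteq> v" by blast
    then show ?thesis
    proof cases
      case 1
      have "1 / d (prt u) > 0" using dpu by simp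
      then show ?thesis using P unfolding 1 by linarith
    next
      case 2
      have "1 / d (prt v) > 0" using dpu by simp
      then show ?thesis using R unfolding 2 by linarith
    next
      case 3 then show ?thesis using dpos i unfolding g2_def by auto
    qed
  qed
  have psd: "psd_complex (2*S) (MM S ?g)"
  proof (rule psd_MM[OF uvl uvd])
    show "\<And>i j. i < 2*S \<Longrightarrow> j < 2*S \<Longrightarrow> i \<noteq> j \<Longrightarrow> (i = u \<and> j = v) \<or> (i = v \<and> j = u) \<or> ?g i j = 0"
      using g2_off by blast
    show "?g u v = c * s * (d u - d v)" "?g v u = c * s * (d u - d v)" using uv unfolding g2_def by auto
    show "\<And>i. i < 2*S \<Longrightarrow> ?g i i > 0" by (rule gpos)
    show "\<And>k. k < S \<Longrightarrow> k \<noteq> u div 2 \<Longrightarrow> k \<noteq> v div 2 \<Longrightarrow> ?g (2*k) (2*k) * ?g (Suc (2*k)) (Suc (2*k)) \<ge> 1"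
    proof -
      fix k assume k: "k < S" "k \<noteq> u div 2" "k \<noteq> v div 2"
      then have "2*k \<noteq> u" "2*k \<noteq> v" "Suc (2*k) \<noteq> u" "Suc (2*k) \<noteq> v" by auto
      then show "?g (2*k) (2*k) * ?g (Suc (2*k)) (Suc (2*k)) \<ge> 1" using dmodes[OF k(1)] unfolding g2_def by simp
    qed
    show "?g u u - 1 / ?g (prt u) (prt u) \<ge> 0" using P gp by simp
    show "?g v v - 1 / ?g (prt v) (prt v) \<ge> 0" using R gp by simp
    show "(c * s * (d u - d v))^2 \<le> (?g u u - 1 / ?g (prt u) (prt u)) * (?g v v - 1 / ?g (prt v) (prt v))"
      using PR gp by simp
  qed
  have Geq: "?G = rot (2*S) u v c s * dg (2*S) d * transpose_mat (rot (2*S) u v c s)"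
    by (rule G2_eq[OF uvl uv])
  have posdef: "pos_def_real (2*S) ?G"
    unfolding pos_def_real_def
  proof (intro conjI ballI impI)
    show "?G \<in> carrier_mat (2*S) (2*S)" by (rule mat_carrier)
    fix x :: "real vec" assume x: "x \<in> carrier_vec (2*S)" and x0: "x \<noteq> 0\<^sub>v (2*S)"
    let ?R = "rot (2*S) u v c s"
    let ?w = "transpose_mat ?R *\<^sub>v x"
    have Rt: "transpose_mat ?R \<in> carrier_mat (2*S) (2*S)" by (rule transpose_carrier_mat[THEN iffD2, OF rot_carrier])
    have wc: "?w \<in> carrier_vec (2*S)" by (rule mult_mat_vec_carrier[OF Rt x])
    have "?R *\<^sub>v ?w = (?R * transpose_mat ?R) *\<^sub>v x"
      by (rule assoc_mult_mat_vec[OF rot_carrier Rt x, symmetric])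
    also have "?R * transpose_mat ?R = 1\<^sub>m (2*S)"
      using rot_orth[OF uvl uv cs] rot_transpose[OF uv] by simp
    finally have "?R *\<^sub>v ?w = x" using x by simp
    then have w0: "?w \<noteq> 0\<^sub>v (2*S)"
    proof (intro notI)
      assume "?R *\<^sub>v ?w = x" "?w = 0\<^sub>v (2*S)"
      then have "x = ?R *\<^sub>v 0\<^sub>v (2*S)" by simp
      also have "\<dots> = 0\<^sub>v (2*S)" by (rule mat_vec_zero) simp
      finally show False using x0 by simp
    qed
    have "x \<bullet> (?G *\<^sub>v x) = x \<bullet> (?R *\<^sub>v (dg (2*S) d *\<^sub>v ?w))"
    proof -
      have "(?R * dg (2*S) d * transpose_mat ?R) *\<^sub>v x = (?R * dg (2*S) d) *\<^sub>v ?w"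
        by (rule assoc_mult_mat_vec[OF sq_mult[OF rot_carrier dg_carrier] transpose_carrier_mat[THEN iffD2, OF rot_carrier] x])
      also have "\<dots> = ?R *\<^sub>v (dg (2*S) d *\<^sub>v ?w)"
        by (rule assoc_mult_mat_vec[OF rot_carrier dg_carrier wc])
      finally have "(?R * dg (2*S) d * transpose_mat ?R) *\<^sub>v x = ?R *\<^sub>v (dg (2*S) d *\<^sub>v ?w)" .
      then show ?thesis unfolding Geq by (rule arg_cong)
    qed
    also have "\<dots> = ?w \<bullet> (dg (2*S) d *\<^sub>v ?w)"
      by (rule transpose_vec_mult_scalar[symmetric, OF rot_carrier _ x]) (rule mult_mat_vec_carrier[OF dg_carrier wc])
    finally have "x \<bullet> (?G *\<^sub>v x) = ?w \<bullet> (dg (2*S) d *\<^sub>v ?w)" .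
    then show "x \<bullet> (?G *\<^sub>v x) > 0" using dg_posdef[of "2*S" d, OF dpos wc w0] by linarith
  qed
  show ?thesis
    unfolding quantum_CM_def
  proof (intro conjI)
    show "?G \<in> carrier_mat (2*S) (2*S)" by simp
    show "transpose_mat ?G = ?G" by (rule eq_matI) (auto simp: g2_sym)
    show "pos_def_real (2*S) ?G" by (rule posdef)
    show "psd_complex (2 * S) (map_mat complex_of_real ?G + \<i> \<cdot>\<^sub>m map_mat complex_of_real (Omega S))"
      using psd unfolding MM_def .
  qed
qed

lemma charpoly_g2: assumes uvl: "u < n" "v < n" and uv: "u \<noteq> v" and cs: "c^2 + s^2 = 1"
  shows "char_poly (mat n n (\<lambda>(i,j). g2 u v c s d i j)) = (\<Prod>a \<leftarrow> map d [0..<n]. [:- a, 1:])"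
proof -
  let ?R = "rot n u v c s" and ?G = "mat n n (\<lambda>(i,j). g2 u v c s d i j)"
  have Rt: "transpose_mat ?R \<in> carrier_mat n n" by (rule transpose_carrier_mat[THEN iffD2, OF rot_carrier])
  have o: "?R * transpose_mat ?R = 1\<^sub>m n" "transpose_mat ?R * ?R = 1\<^sub>m n"
    using rot_orth[OF uvl uv cs] rot_transpose[OF uv] by simp_all
  have "similar_mat ?G (dg n d)"
    unfolding similar_mat_def similar_mat_wit_def Let_def
    by (rule exI[of _ ?R], rule exI[of _ "transpose_mat ?R"]) (use o Rt G2_eq[OF uvl uv] in auto)
  then have "char_poly ?G = char_poly (dg n d)" by (rule char_poly_similar)
  also have "\<dots> = (\<Prod>a \<leftarrow> diag_mat (dg n d). [:- a, 1:])"
    by (rule char_poly_upper_triangular[OF dg_carrier]) (auto simp: upper_triangular_def dg_def)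
  also have "diag_mat (dg n d) = map d [0..<n]"
    unfolding diag_mat_def by (auto simp: dg_def)
  finally show ?thesis .
qed

lemma prod_list_mset: "mset xs = mset ys \<Longrightarrow> prod_list (map f xs) = prod_list (map f ys)"
  for f :: "'a \<Rightarrow> 'b::comm_monoid_mult"
  by (metis mset_map prod_mset_prod_list)

lemma tX_le: assumes "0 \<le> t" "t \<le> m / K" "0 \<le> X" "X \<le> K" "K > 0" "m \<ge> 0"
  shows "t * X \<le> (m::real)"
proof -
  have "t * X \<le> (m / K) * K" using assms by (intro mult_mono) auto
  also have "\<dots> = m" using assms by simp
  finally show ?thesis .
qed

lemma t_exists: assumes a0: "a0 > 0" and b0: "b0 > (0::real)"
  shows "\<exists>t. 0 < t \<and> t < 1 \<and> a0 - t * \<delta> \<ge> 0 \<and> b0 + t * \<delta> \<ge> 0 \<and>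
     a0 * b0 + t * \<delta> * (a0 - b0) - t * \<delta>^2 \<ge> 0"
proof -
  define K where "K = 1 + \<bar>\<delta>\<bar> + \<bar>\<delta> * (a0 - b0)\<bar> + \<delta>^2"
  define m where "m = min a0 (min b0 (a0 * b0))"
  define t where "t = min (1/2) (m / K)"
  have K: "K > 0" unfolding K_def by (smt (verit) abs_ge_zero zero_le_power2)
  have m: "m > 0" unfolding m_def using a0 b0 by simp
  have t0: "t > 0" unfolding t_def using K m by simp
  have t1: "t < 1" unfolding t_def by simp
  have tm: "t \<le> m / K" unfolding t_def by simp
  have e1: "t * \<bar>\<delta>\<bar> \<le> m" by (rule tX_le[OF _ tm]) (use t0 K m in \<open>auto simp: K_def\<close>)
  have e2: "t * (\<bar>\<delta> * (a0 - b0)\<bar> + \<delta>^2) \<le> m" by (rule tX_le[OF _ tm]) (use t0 K m in \<open>auto simp: K_def\<close>)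
  have "m \<le> a0" "m \<le> b0" "m \<le> a0 * b0" unfolding m_def by auto
  moreover have "\<bar>t * \<delta>\<bar> = t * \<bar>\<delta>\<bar>" using t0 by (simp add: abs_mult)
  moreover have "\<bar>t * \<delta> * (a0 - b0)\<bar> = t * \<bar>\<delta> * (a0 - b0)\<bar>" using t0 by (simp add: abs_mult)
  moreover have "t * \<delta>^2 \<ge> 0" using t0 by simp
  ultimately have "a0 - t * \<delta> \<ge> 0 \<and> b0 + t * \<delta> \<ge> 0 \<and> a0 * b0 + t * \<delta> * (a0 - b0) - t * \<delta>^2 \<ge> 0"
    using e1 e2 by (auto simp: algebra_simps)
  then show ?thesis using t0 t1 by blast
qed

lemma g2_10: assumes "u \<noteq> v" shows "g2 u v 1 0 d i j = (if i = j then d i else 0)"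
proof -
  have "g2 u v 1 0 d i j = (if i = u \<and> j = u then d u else if i = v \<and> j = v then d v
     else if (i = u \<and> j = v) \<or> (i = v \<and> j = u) then 0 else if i = j then d i else 0)"
    unfolding g2_def by simp
  also have "\<dots> = (if i = j then d i else 0)" using assms by (cases "i = j") auto
  finally show ?thesis .
qed

lemma core:
  assumes lenL: "length Lam = 2*S" and sortL: "sorted_wrt (\<ge>) Lam"
  and dmset: "mset (map d [0..<2*S]) = mset Lam"
  and dpos: "\<And>i. i < 2*S \<Longrightarrow> d i > 0"
  and dmodes: "\<And>k. k < S \<Longrightarrow> d (2*k) * d (Suc (2*k)) \<ge> 1"
  and uvl: "u < 2*S" "v < 2*S" and uvd: "u div 2 \<noteq> v div 2"
  and duv: "d u \<noteq> d v" and dp: "d (prt u) \<noteq> d (prt v)"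
  and su: "d u * d (prt u) > 1" and sv: "d v * d (prt v) > 1"
  shows
    "(\<exists>G1 G2. quantum_CM S G1 \<and> eigenspectrum G1 Lam \<and>
              quantum_CM S G2 \<and> eigenspectrum G2 Lam \<and>
              (\<forall>nu1 nu2. symplectic_eigenvalues S G1 nu1 \<and> symplectic_eigenvalues S G2 nu2
                   \<longrightarrow> mset nu1 \<noteq> mset nu2))
     \<and>
     (\<exists>G1 G2. quantum_CM S G1 \<and> eigenspectrum G1 Lam \<and>
              quantum_CM S G2 \<and> eigenspectrum G2 Lam \<and>
              (\<exists>Q. orthogonal_real (2*S) Q \<and> G2 = Q * G1 * transpose_mat Q) \<and>
              \<not> (\<exists>K \<in> SpO S. G2 = K * G1 * transpose_mat K))"
proof -
  have uv: "u \<noteq> v" using uvd by auto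
  have pu: "prt u \<noteq> u" "prt u \<noteq> v" "prt v \<noteq> u" "prt v \<noteq> v"
    using uvd prt_neq[of u] prt_neq[of v] prt_div[of u] prt_div[of v] by auto
  have dpu: "d (prt u) > 0" "d (prt v) > 0" using dpos prt_lt uvl by auto
  define a0 where "a0 = d u - 1 / d (prt u)"
  define b0 where "b0 = d v - 1 / d (prt v)"
  define \<delta> where "\<delta> = d u - d v"
  have a0: "a0 > 0"
  proof -
    have "1 / d (prt u) < d u" using su dpu by (simp add: divide_less_eq)
    then show ?thesis unfolding a0_def by simp
  qed
  have b0: "b0 > 0"
  proof -
    have "1 / d (prt v) < d v" using sv dpu by (simp add: divide_less_eq)
    then show ?thesis unfolding b0_def by simp
  qed
  obtain t where t: "0 < t" "t < 1" "a0 - t * \<delta> \<ge> 0" "b0 + t * \<delta> \<ge> 0"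
     "a0 * b0 + t * \<delta> * (a0 - b0) - t * \<delta>^2 \<ge> 0"
    using t_exists[OF a0 b0, of \<delta>] by blast
  define c where "c = sqrt (1 - t)"
  define s where "s = sqrt t"
  have c2: "c^2 = 1 - t" unfolding c_def using t by simp
  have s2: "s^2 = t" unfolding s_def using t by simp
  have cs: "c^2 + s^2 = 1" using c2 s2 by simp
  have cs10: "(1::real)^2 + 0^2 = 1" by simp
  let ?G1 = "mat (2*S) (2*S) (\<lambda>(i,j). g2 u v 1 0 d i j)"
  let ?G2 = "mat (2*S) (2*S) (\<lambda>(i,j). g2 u v c s d i j)"
  have guu: "g2 u v c s d u u = c^2 * d u + s^2 * d v" by (simp add: g2_def)
  have gvv: "g2 u v c s d v v = s^2 * d u + c^2 * d v" using uv by (simp add: g2_def)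
  have q1: "quantum_CM S ?G1"
  proof (rule quantum_g2[OF uvl uvd cs10 dpos dmodes])
    show "g2 u v 1 0 d u u - 1 / d (prt u) \<ge> 0" using a0 unfolding a0_def by (simp add: g2_def)
    show "g2 u v 1 0 d v v - 1 / d (prt v) \<ge> 0" using b0 uv unfolding b0_def by (simp add: g2_def)
    show "(1 * 0 * (d u - d v))^2 \<le> (g2 u v 1 0 d u u - 1 / d (prt u)) * (g2 u v 1 0 d v v - 1 / d (prt v))"
      using a0 b0 uv unfolding a0_def b0_def by (simp add: g2_def)
  qed
  have P: "g2 u v c s d u u - 1 / d (prt u) = a0 - t * \<delta>"
    unfolding guu c2 s2 a0_def \<delta>_def by (simp add: algebra_simps)
  have R: "g2 u v c s d v v - 1 / d (prt v) = b0 + t * \<delta>"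
    unfolding gvv c2 s2 b0_def \<delta>_def by (simp add: algebra_simps)
  have B: "(c * s * (d u - d v))^2 = (1 - t) * t * \<delta>^2"
    unfolding power_mult_distrib c2 s2 \<delta>_def by simp
  have q2: "quantum_CM S ?G2"
  proof (rule quantum_g2[OF uvl uvd cs dpos dmodes])
    show "g2 u v c s d u u - 1 / d (prt u) \<ge> 0" using t unfolding P by simp
    show "g2 u v c s d v v - 1 / d (prt v) \<ge> 0" using t unfolding R by simp
    have "(a0 - t * \<delta>) * (b0 + t * \<delta>) - (1 - t) * t * \<delta>^2 = a0 * b0 + t * \<delta> * (a0 - b0) - t * \<delta>^2"
      by (simp add: algebra_simps power2_eq_square)
    then show "(c * s * (d u - d v))^2 \<le> (g2 u v c s d u u - 1 / d (prt u)) * (g2 u v c s d v v - 1 / d (prt v))"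
      unfolding P R B using t(5) by linarith
  qed
  have eig: "eigenspectrum (mat (2*S) (2*S) (\<lambda>(i,j). g2 u v c' s' d i j)) Lam" if "c'^2 + s'^2 = 1" for c' s'
    unfolding eigenspectrum_def
  proof (intro conjI)
    show "sorted_wrt (\<ge>) Lam" by (rule sortL)
    show "length Lam = dim_row (mat (2*S) (2*S) (\<lambda>(i,j). g2 u v c' s' d i j))" using lenL by simp
    show "char_poly (mat (2*S) (2*S) (\<lambda>(i,j). g2 u v c' s' d i j)) = (\<Prod>a\<leftarrow>Lam. [:- a, 1:])"
      unfolding charpoly_g2[OF uvl uv that] by (rule prod_list_mset[OF dmset])
  qed
  have e1: "eigenspectrum ?G1 Lam" by (rule eig[OF cs10])
  have e2: "eigenspectrum ?G2 Lam" by (rule eig[OF cs])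
  have TTne: "TT S ?G2 \<noteq> TT S ?G1"
  proof -
    have "TT S ?G2 - TT S ?G1 = - 2 * (s^2 * (d v - d u) * (d (prt u) - d (prt v)))"
      by (rule TT_diff[OF uvl uvd cs])
    moreover have "s^2 * (d v - d u) * (d (prt u) - d (prt v)) \<noteq> 0"
      using s2 t(1) duv dp by simp
    ultimately show ?thesis by auto
  qed
  have G1c: "?G1 \<in> carrier_mat (2*S) (2*S)" by simp
  have part1: "\<forall>nu1 nu2. symplectic_eigenvalues S ?G1 nu1 \<and> symplectic_eigenvalues S ?G2 nu2
                   \<longrightarrow> mset nu1 \<noteq> mset nu2"
  proof (intro allI impI)
    fix nu1 nu2 assume h: "symplectic_eigenvalues S ?G1 nu1 \<and> symplectic_eigenvalues S ?G2 nu2"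
    show "mset nu1 \<noteq> mset nu2"
      by (rule symp_mset[of S ?G1 nu1 ?G2 nu2]) (use h TTne in auto)
  qed
  let ?Q = "rot (2*S) u v c s"
  have G1dg: "?G1 = dg (2*S) d" unfolding g2_10[OF uv] dg_def ..
  have orth: "orthogonal_real (2*S) ?Q"
    unfolding orthogonal_real_def using rot_orth[OF uvl uv cs] rot_transpose[OF uv] by simp
  have G2Q: "?G2 = ?Q * ?G1 * transpose_mat ?Q" unfolding G1dg by (rule G2_eq[OF uvl uv])
  have noK: "\<not> (\<exists>K \<in> SpO S. ?G2 = K * ?G1 * transpose_mat K)"
  proof
    assume "\<exists>K \<in> SpO S. ?G2 = K * ?G1 * transpose_mat K"
    then obtain K where K: "symplectic S K" "?G2 = K * ?G1 * transpose_mat K" unfolding SpO_def by auto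
    have "TT S ?G2 = TT S ?G1" unfolding K(2) by (rule TT_inv[OF K(1) G1c])
    then show False using TTne by simp
  qed
  show ?thesis
  proof (intro conjI)
    show "\<exists>G1 G2. quantum_CM S G1 \<and> eigenspectrum G1 Lam \<and>
              quantum_CM S G2 \<and> eigenspectrum G2 Lam \<and>
              (\<forall>nu1 nu2. symplectic_eigenvalues S G1 nu1 \<and> symplectic_eigenvalues S G2 nu2
                   \<longrightarrow> mset nu1 \<noteq> mset nu2)"
      by (rule exI[of _ ?G1], rule exI[of _ ?G2]) (intro conjI q1 q2 e1 e2 part1)
    show "\<exists>G1 G2. quantum_CM S G1 \<and> eigenspectrum G1 Lam \<and>
              quantum_CM S G2 \<and> eigenspectrum G2 Lam \<and>
              (\<exists>Q. orthogonal_real (2*S) Q \<and> G2 = Q * G1 * transpose_mat Q) \<and>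
              \<not> (\<exists>K \<in> SpO S. G2 = K * G1 * transpose_mat K)"
      by (rule exI[of _ ?G1], rule exI[of _ ?G2]) (intro conjI q1 q2 e1 e2 noK exI[of _ ?Q] orth G2Q)
  qed
qed

lemma dbl: assumes e: "{a,b} = {i,j}" and ij: "i < (j::nat)" and jL: "j < L"
  shows "a < L \<and> b < L \<and> a \<noteq> b"
proof -
  have "a \<in> {i,j}" "b \<in> {i,j}" using e by (metis insertI1, metis insertI1 insert_commute)
  then have "a < L" "b < L" using ij jL by auto
  moreover have "a \<noteq> b"
  proof
    assume "a = b"
    then have "i \<in> {a}" "j \<in> {a}" using e by (metis insert_absorb2 insertI1, metis insert_absorb2 insertI1 insert_commute)
    then show False using ij by simp
  qed
  ultimately show ?thesis by simp
qed

theorem corollary1: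
  fixes S :: nat and Lam :: "real list" and nu r :: "nat \<Rightarrow> real" and p q :: "nat \<Rightarrow> nat"
  assumes S: "S \<ge> 1"
    and spec: "\<exists>G. quantum_CM S G \<and> eigenspectrum G Lam"
    and upc: "unique_pairing Lam"
    and not_pure: "\<not> t_pure_unique_pairing (S - 1) Lam"
    (* the unique perfect matching written as pairs (nu_i e^{-2 r_i}, nu_i e^{2 r_i}) *)
    and match: "perfect_matching Lam {{p i, q i} | i. i < S}"
    and pair_vals: "\<forall>i < S. Lam ! (p i) = nu i * exp (- 2 * r i) \<and> Lam ! (q i) = nu i * exp (2 * r i)"
    and r_nonneg: "\<forall>i < S. r i \<ge> 0"
    and nu_ge1: "\<forall>i < S. nu i \<ge> 1"
    and nu_sorted: "\<forall>i j. i \<le> j \<and> j < S \<longrightarrow> nu j \<le> nu i"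
    (* at least two entries of the 2 zeta-tuple differ from all other entries *)
    and distinct_entries:
      "let \<zeta> = card {i. i < S \<and> nu i > 1};
           tup = (\<lambda>k. if even k then nu (k div 2) * exp (- 2 * r (k div 2))
                               else nu (k div 2) * exp (2 * r (k div 2)))
       in \<exists>a b. a < 2 * \<zeta> \<and> b < 2 * \<zeta> \<and> a \<noteq> b \<and>
               (\<forall>k < 2 * \<zeta>. k \<noteq> a \<longrightarrow> tup k \<noteq> tup a) \<and>
               (\<forall>k < 2 * \<zeta>. k \<noteq> b \<longrightarrow> tup k \<noteq> tup b)"
  shows
    "(\<exists>G1 G2. quantum_CM S G1 \<and> eigenspectrum G1 Lam \<and>
              quantum_CM S G2 \<and> eigenspectrum G2 Lam \<and>
              (\<forall>nu1 nu2. symplectic_eigenvalues S G1 nu1 \<and> symplectic_eigenvalues S G2 nu2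
                   \<longrightarrow> mset nu1 \<noteq> mset nu2))
     \<and>
     (\<exists>G1 G2. quantum_CM S G1 \<and> eigenspectrum G1 Lam \<and>
              quantum_CM S G2 \<and> eigenspectrum G2 Lam \<and>
              (\<exists>Q. orthogonal_real (2*S) Q \<and> G2 = Q * G1 * transpose_mat Q) \<and>
              \<not> (\<exists>K \<in> SpO S. G2 = K * G1 * transpose_mat K))"
proof -
  obtain G0 where G0: "quantum_CM S G0" "eigenspectrum G0 Lam" using spec by blast
  have lenL: "length Lam = 2*S" using G0 unfolding quantum_CM_def eigenspectrum_def by auto
  have sortL: "sorted_wrt (\<ge>) Lam" using G0(2) unfolding eigenspectrum_def by auto
  define z where "z = card {i. i < S \<and> nu i > 1}"
  define d where "d = (\<lambda>k. if even k then nu (k div 2) * exp (- 2 * r (k div 2))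
                               else nu (k div 2) * exp (2 * r (k div 2)))"
  have DE: "\<exists>a b. a < 2 * z \<and> b < 2 * z \<and> a \<noteq> b \<and>
               (\<forall>k < 2 * z. k \<noteq> a \<longrightarrow> d k \<noteq> d a) \<and>
               (\<forall>k < 2 * z. k \<noteq> b \<longrightarrow> d k \<noteq> d b)"
    using distinct_entries unfolding Let_def z_def d_def by simp
  define f where "f = (\<lambda>i. if even i then p (i div 2) else q (i div 2))"
  have fd: "Lam ! (f i) = d i" if "i < 2*S" for i
    using pair_vals that unfolding f_def d_def by auto
  let ?M = "{{p i, q i} | i. i < S}"
  have PM1: "\<forall>e\<in>?M. \<exists>i j. e = {i,j} \<and> edge_G Lam i j" and PM2: "\<forall>w<length Lam. \<exists>!e. e\<in>?M \<and> w\<in>e"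
    using match unfolding perfect_matching_def by auto
  have pq: "p k < 2*S \<and> q k < 2*S \<and> p k \<noteq> q k" if k: "k < S" for k
  proof -
    have "{p k, q k} \<in> ?M" using k by auto
    then obtain i j where ij: "{p k,q k} = {i,j}" "edge_G Lam i j" using PM1 by meson
    then have "i < j" "j < 2*S" using lenL unfolding edge_G_def by simp_all
    then show ?thesis using dbl[OF ij(1)] by simp
  qed
  have fimg: "f ` {..<2*S} = {..<2*S}"
  proof
    show "f ` {..<2*S} \<subseteq> {..<2*S}"
    proof
      fix y assume "y \<in> f ` {..<2*S}"
      then obtain x where x: "x < 2*S" "y = f x" by auto
      have "x div 2 < S" using x by simp
      then have "p (x div 2) < 2*S" "q (x div 2) < 2*S" using pq by auto
      then show "y \<in> {..<2*S}" using x unfolding f_def by simp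
    qed
    show "{..<2*S} \<subseteq> f ` {..<2*S}"
    proof
      fix w assume w: "w \<in> {..<2*S}"
      have "\<exists>!e. e \<in> ?M \<and> w \<in> e" using PM2 w lenL by simp
      then have "\<exists>e. e \<in> ?M \<and> w \<in> e" by (rule ex1_implies_ex)
      then obtain e where e: "e \<in> ?M \<and> w \<in> e" by (rule exE)
      then obtain k where k: "k < S" "w = p k \<or> w = q k" by auto
      show "w \<in> f ` {..<2*S}"
      proof (cases "w = p k")
        case True
        then have "w = f (2*k)" unfolding f_def by simp
        moreover have "2*k \<in> {..<2*S}" using k by simp
        ultimately show ?thesis by (rule image_eqI)
      next
        case False
        then have "w = f (Suc (2*k))" using k unfolding f_def by simp
        moreover have "Suc (2*k) \<in> {..<2*S}" using k by simp
        ultimately show ?thesis by (rule image_eqI)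
      qed
    qed
  qed
  have finj: "inj_on f {..<2*S}"
    by (rule eq_card_imp_inj_on) (simp_all only: fimg finite_lessThan)
  have dmset: "mset (map d [0..<2*S]) = mset Lam"
  proof -
    have A: "map d [0..<2*S] = map ((!) Lam) (map f [0..<2*S])"
      unfolding map_map by (rule map_cong) (auto simp: fd)
    have B: "mset (map f [0..<2*S]) = mset [0..<2*S]"
    proof (rule set_eq_iff_mset_eq_distinct[THEN iffD1])
      show "distinct (map f [0..<2*S])" using finj by (simp add: distinct_map atLeast0LessThan)
      show "distinct [0..<2*S]" by simp
      show "set (map f [0..<2*S]) = set [0..<2*S]" using fimg by (simp add: atLeast0LessThan)
    qed
    have "mset (map d [0..<2*S]) = image_mset ((!) Lam) (mset [0..<2*S])"
      unfolding A mset_map[of "(!) Lam"] B ..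
    also have "\<dots> = mset (map ((!) Lam) [0..<length Lam])" unfolding lenL mset_map ..
    also have "\<dots> = mset Lam" by (simp add: map_nth)
    finally show ?thesis .
  qed
  have dpos: "d i > 0" if "i < 2*S" for i
  proof -
    have "i div 2 < S" using that by simp
    then have "nu (i div 2) \<ge> 1" using nu_ge1 by simp
    then show ?thesis unfolding d_def by simp
  qed
  have dprod: "d i * d (prt i) = nu (i div 2)^2" for i
  proof -
    have e: "exp (- 2 * x) * exp (2 * x) = 1" for x :: real by (simp add: exp_add[symmetric])
    show ?thesis
    proof (cases "even i")
      case True
      then have "prt i = Suc i" "Suc i div 2 = i div 2" "odd (Suc i)" by (auto simp: prt_def)
      then show ?thesis using True e[of "r (i div 2)"] unfolding d_def by (simp add: power2_eq_square algebra_simps)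
    next
      case False
      then have "prt i = i - 1" "(i - 1) div 2 = i div 2" "even (i - 1)" by (auto simp: prt_def) presburger+
      then show ?thesis using False e[of "r (i div 2)"] unfolding d_def by (simp add: power2_eq_square algebra_simps)
    qed
  qed
  have dmodes: "d (2*k) * d (Suc (2*k)) \<ge> 1" if "k < S" for k
  proof -
    have "d (2*k) * d (Suc (2*k)) = nu k ^ 2" using dprod[of "2*k"] by (simp add: prt_def)
    then show ?thesis using nu_ge1 that by (simp add: one_le_power)
  qed
  let ?A = "{i. i < S \<and> nu i > 1}"
  have finA: "finite ?A" by simp
  have zS: "z \<le> S" unfolding z_def by (rule card_mono[of "{..<S}", simplified]) auto
  have zlow: "i < S \<and> nu i > 1" if i: "i < z" for i
  proof (rule ccontr)
    assume h: "\<not> (i < S \<and> nu i > 1)"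
    have "?A \<subseteq> {..<i}"
    proof
      fix j assume j: "j \<in> ?A"
      show "j \<in> {..<i}"
      proof (rule ccontr)
        assume "j \<notin> {..<i}"
        then have "i \<le> j" by simp
        then have "nu j \<le> nu i" "i < S" using nu_sorted j by auto
        then show False using h j by auto
      qed
    qed
    then have "z \<le> i" unfolding z_def by (metis card_lessThan card_mono finite_lessThan)
    then show False using i by simp
  qed
  have z2: "z \<ge> 2"
  proof (rule ccontr)
    assume zl: "\<not> 2 \<le> z"
    have nu1: "nu i = 1" if "1 \<le> i" "i < S" for i
    proof (rule ccontr)
      assume "nu i \<noteq> 1"
      then have "nu i > 1" using nu_ge1 that by force
      moreover have "nu i \<le> nu 0" using nu_sorted that by auto
      ultimately have "{0, i} \<subseteq> ?A" using that by auto
      then have "card {0, i} \<le> z" unfolding z_def by (rule card_mono[OF finA])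
      then show False using that zl by simp
    qed
    have Meq: "?M = (\<lambda>i. {p i, q i}) ` {..<S}" by auto
    have inj: "inj_on (\<lambda>i. {p i, q i}) {..<S}"
    proof (rule inj_onI)
      fix i j assume i: "i \<in> {..<S}" and j: "j \<in> {..<S}" and e: "{p i, q i} = {p j, q j}"
      have fi: "f (2*i) = p i" "f (2*j) = p j" "f (Suc (2*j)) = q j" unfolding f_def by auto
      have "p i = p j \<or> p i = q j" using e by (auto simp: doubleton_eq_iff)
      then have "f (2*i) = f (2*j) \<or> f (2*i) = f (Suc (2*j))" using fi by simp
      moreover have "2*i \<in> {..<2*S}" "2*j \<in> {..<2*S}" "Suc (2*j) \<in> {..<2*S}" using i j by auto
      ultimately have "2*i = 2*j \<or> 2*i = Suc (2*j)" using finj by (meson inj_onD)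
      then show "i = j" by presburger
    qed
    have pure: "pure_edge Lam {p i, q i}" if "1 \<le> i" "i < S" for i
    proof -
      have prod: "Lam ! (p i) * Lam ! (q i) = 1"
      proof -
        have "Lam ! (p i) * Lam ! (q i) = d (2*i) * d (Suc (2*i))"
          using fd[of "2*i"] fd[of "Suc (2*i)"] that unfolding f_def by auto
        also have "\<dots> = nu i ^ 2" using dprod[of "2*i"] by (simp add: prt_def)
        finally show ?thesis using nu1[OF that] by simp
      qed
      have "p i \<noteq> q i" using pq that by auto
      then show ?thesis
      proof (cases "p i < q i")
        case True then show ?thesis using prod unfolding pure_edge_def by blast
      next
        case False
        then have "q i < p i" using \<open>p i \<noteq> q i\<close> by simp
        moreover have "{p i, q i} = {q i, p i}" by auto
        ultimately show ?thesis using prod unfolding pure_edge_def by (metis mult.commute)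
      qed
    qed
    have sub: "(\<lambda>i. {p i, q i}) ` {1..<S} \<subseteq> {e \<in> ?M. pure_edge Lam e}"
      using pure by auto
    have cardimg: "card ((\<lambda>i. {p i, q i}) ` {1..<S}) = S - 1"
      by (subst card_image) (auto intro: inj_on_subset[OF inj])
    have "finite {e \<in> ?M. pure_edge Lam e}" unfolding Meq by simp
    then have "card {e \<in> ?M. pure_edge Lam e} \<ge> S - 1"
      using card_mono[OF _ sub] cardimg by simp
    then have "t_pure_unique_pairing (S - 1) Lam"
      unfolding t_pure_unique_pairing_def using upc match by blast
    then show False using not_pure by simp
  qed
  obtain a b where ab: "a < 2*z" "b < 2*z" "a \<noteq> b"
    and ua: "\<And>k. k < 2*z \<Longrightarrow> k \<noteq> a \<Longrightarrow> d k \<noteq> d a"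
    and ub: "\<And>k. k < 2*z \<Longrightarrow> k \<noteq> b \<Longrightarrow> d k \<noteq> d b"
    using DE by blast
  have "\<exists>u v. u < 2*z \<and> v < 2*z \<and> u div 2 \<noteq> v div 2 \<and> d u \<noteq> d v \<and> d (prt u) \<noteq> d (prt v)"
  proof (cases "a div 2 = b div 2")
    case False
    have v: "prt b < 2*z" using prt_lt ab by auto
    have d1: "d a \<noteq> d (prt b)"
    proof -
      have "prt b \<noteq> a" using False prt_div[of b] by metis
      then show ?thesis using ua[OF v] by metis
    qed
    have d2: "d (prt a) \<noteq> d (prt (prt b))"
    proof -
      have "prt a \<noteq> b" using False prt_div[of a] by metis
      then show ?thesis using ub[OF prt_lt[OF ab(1)]] by simp
    qed
    show ?thesis
      by (rule exI[of _ a], rule exI[of _ "prt b"]) (use ab v False d1 d2 in simp)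
  next
    case True
    have bpa: "b = prt a" using True ab(3) unfolding prt_def by presburger
    define n0 where "n0 = (if a div 2 = 0 then 1 else (0::nat))"
    have n0: "n0 < z" "n0 \<noteq> a div 2" unfolding n0_def using z2 by auto
    have v: "2*n0 < 2*z" using n0 by simp
    have vd: "(2*n0) div 2 = n0" by simp
    have d1: "d a \<noteq> d (2*n0)"
    proof -
      have "2*n0 \<noteq> a" using n0 vd by metis
      then show ?thesis using ua[OF v] by metis
    qed
    have d2: "d (prt a) \<noteq> d (prt (2*n0))"
    proof -
      have "prt (2*n0) \<noteq> b" using n0 True prt_div[of "2*n0"] vd by metis
      then show ?thesis using ub[OF prt_lt[OF v]] bpa by metis
    qed
    show ?thesis
      by (rule exI[of _ a], rule exI[of _ "2*n0"]) (use ab v n0 vd d1 d2 in simp)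
  qed
  then obtain u v where uv: "u < 2*z" "v < 2*z" "u div 2 \<noteq> v div 2" "d u \<noteq> d v" "d (prt u) \<noteq> d (prt v)"
    by blast
  have uvl: "u < 2*S" "v < 2*S" using uv zS by auto
  have su: "d u * d (prt u) > 1"
  proof -
    have "nu (u div 2) > 1" using zlow uv by auto
    then show ?thesis using dprod[of u] by (simp add: one_less_power)
  qed
  have sv: "d v * d (prt v) > 1"
  proof -
    have "nu (v div 2) > 1" using zlow uv by auto
    then show ?thesis using dprod[of v] by (simp add: one_less_power)
  qed
  show ?thesis
    by (rule core[OF lenL sortL dmset dpos dmodes uvl uv(3,4,5) su sv])
qed

end
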